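(* Let $\mathbb{F}$ be any field and let $n,d\ge 1$. For every $n^d\times n^d$ matrix $M$ over $\mathbb{F}$, \[ \mathcal{L}_{\mathsf{sm}}\big(\mathrm{ShiftedTensor}(M)\big)\;\ge\;\frac{\mathrm{PT\text{-}rank}(M)}{n^{\,d-\log_2 d+1}}. \] Equivalently, every syntactically set-multilinear arithmetic formula computing the set-multilinear polynomial \[ \widetilde Q_M=\sum_{\vec i,\vec j\in[n]^d} M_{\vec i,\vec j}\,\widetilde X^{(0)}_{i_1}\widetilde X^{(1)}_{j_1,i_2}\cdots\widetilde X^{(d-1)}_{j_{d-1},i_d}\widetilde X^{(d)}_{j_d} \] (with respect to the $d+1$ variable blocks $\widetilde X^{(0)},\dots,\widetilde X^{(d)}$) has at least $\mathrm{PT\text{-}rank}(M)/n^{d-\log_2 d+1}$ leaves.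
   Context: Rows and columns of an $n^d\times n^d$ matrix $M$ are indexed by $d$-tuples in $[n]^d$. For $k\in[d]$ the $k$-th partial transpose is $M^{\top_k}_{(i_1,\dots,i_d),(j_1,\dots,j_d)}=M_{(i_1,\dots,i_{k-1},j_k,i_{k+1},\dots,i_d),(j_1,\dots,j_{k-1},i_k,j_{k+1},\dots,j_d)}$; for $\kappa\subseteq[d]$, $M^{\top_\kappa}$ is the composition of the (commuting) $\top_k$, $k\in\kappa$. $M$ is PT-basic if $\mathrm{rank}(M^{\top_\kappa})=1$ for some $\kappa\subseteq[d]$; $\mathrm{PT\text{-}rank}(M)$ is the minimum number of PT-basic matrices summing to $M$. Pairing: $\langle i,j\rangle=(i-1)n+j$, a bijection $[n]^2\to[n^2]$. $\mathrm{ShiftedTensor}(M):[n^2]^{d+1}\to\mathbb{F}$ is defined by $\mathrm{ShiftedTensor}(M)(\langle p,i_1\rangle,\langle j_1,i_2\rangle,\dots,\langle j_{d-1},i_d\rangle,\langle j_d,q\rangle)=\mathbb 1\{p=q=1\}\,M_{(i_1,\dots,i_d),(j_1,\dots,j_d)}$. Set-multilinear formula size: for a nonempty finite set $D$ and a tensor $A:[N]^D\to\mathbb{F}$, $\mathcal L_{\mathsf{sm}}(A)$ is defined inductively: if $|D|=1$, it is $1$ if $A\neq 0$ and $0$ otherwise; if $|D|\ge 2$, it is the minimum of $\sum_i(\mathcal L_{\mathsf{sm}}(B_i)+\mathcal L_{\mathsf{sm}}(C_i))$ over finite families $(E_i,F_i,B_i,C_i)$ with $E_i,F_i$ disjoint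 nonempty, $E_i\cup F_i=D$, $B_i:[N]^{E_i}\to\mathbb{F}$, $C_i:[N]^{F_i}\to\mathbb{F}$ and $A=\sum_i B_i\otimes C_i$. This equals the minimum number of leaves of a syntactically set-multilinear formula computing $\sum_{a\in[N]^D}A(a)\prod_{k\in D}X^{(k)}_{a_k}$. Logarithms are base 2. *)

theory Defs
  imports Complex_Main "HOL-Library.FuncSet" "Jordan_Normal_Form.DL_Rank"
begin

(* Conventions: all index ranges are 0-based.  [n] is {0..<n}; a d-tuple in [n]^d is an
   extensional function in PiE {0..<d} (\<lambda>_. {0..<n}).  An n^d x n^d matrix is a function
   M :: (nat \<Rightarrow> nat) \<Rightarrow> (nat \<Rightarrow> nat) \<Rightarrow> 'a, only its values on tuples matter. *)

definition tuples :: "nat \<Rightarrow> nat \<Rightarrow> (nat \<Rightarrow> nat) set" where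
  "tuples n d = PiE {0..<d} (\<lambda>_. {0..<n})"

(* partial transpose w.r.t. a set kappa of coordinates: composition of the (commuting)
   single-coordinate partial transposes, written out *)
definition partial_transpose ::
  "nat set \<Rightarrow> ((nat \<Rightarrow> nat) \<Rightarrow> (nat \<Rightarrow> nat) \<Rightarrow> 'a) \<Rightarrow> (nat \<Rightarrow> nat) \<Rightarrow> (nat \<Rightarrow> nat) \<Rightarrow> 'a" where
  "partial_transpose \<kappa> M i j =
     M (\<lambda>t. if t \<in> \<kappa> then j t else i t) (\<lambda>t. if t \<in> \<kappa> then i t else j t)"

(* the matrix as a Jordan_Normal_Form matrix, rows/cols ordered by an (arbitrary) fixed
   bijection {0..<n^d} \<rightarrow> [n]^d; the rank does not depend on the chosen ordering *)
definition tuple_enum :: "nat \<Rightarrow> nat \<Rightarrow> nat \<Rightarrow> (nat \<Rightarrow> nat)" where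
  "tuple_enum n d = (SOME g. bij_betw g {0..<n^d} (tuples n d))"

definition to_mat :: "nat \<Rightarrow> nat \<Rightarrow> ((nat \<Rightarrow> nat) \<Rightarrow> (nat \<Rightarrow> nat) \<Rightarrow> 'a) \<Rightarrow> 'a mat" where
  "to_mat n d M = mat (n^d) (n^d) (\<lambda>(r, c). M (tuple_enum n d r) (tuple_enum n d c))"

definition tmat_rank :: "nat \<Rightarrow> nat \<Rightarrow> ((nat \<Rightarrow> nat) \<Rightarrow> (nat \<Rightarrow> nat) \<Rightarrow> 'a::field) \<Rightarrow> nat" where
  "tmat_rank n d M = vec_space.rank (n^d) (to_mat n d M)"

definition PT_basic :: "nat \<Rightarrow> nat \<Rightarrow> ((nat \<Rightarrow> nat) \<Rightarrow> (nat \<Rightarrow> nat) \<Rightarrow> 'a::field) \<Rightarrow> bool" where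
  "PT_basic n d M \<longleftrightarrow> (\<exists>\<kappa> \<subseteq> {0..<d}. tmat_rank n d (partial_transpose \<kappa> M) = 1)"

definition PT_rank :: "nat \<Rightarrow> nat \<Rightarrow> ((nat \<Rightarrow> nat) \<Rightarrow> (nat \<Rightarrow> nat) \<Rightarrow> 'a::field) \<Rightarrow> nat" where
  "PT_rank n d M = (LEAST r. \<exists>Ms :: nat \<Rightarrow> ((nat \<Rightarrow> nat) \<Rightarrow> (nat \<Rightarrow> nat) \<Rightarrow> 'a).
      (\<forall>l<r. PT_basic n d (Ms l)) \<and>
      (\<forall>i\<in>tuples n d. \<forall>j\<in>tuples n d. M i j = (\<Sum>l<r. Ms l i j)))"

(* pairing <p,i> = p*n + i (0-based version of (p-1)n+i) *)
definition shifted_tensor :: "nat \<Rightarrow> nat \<Rightarrow> ((nat \<Rightarrow> nat) \<Rightarrow> (nat \<Rightarrow> nat) \<Rightarrow> 'a::field)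
    \<Rightarrow> (nat \<Rightarrow> nat) \<Rightarrow> 'a" where
  "shifted_tensor n d M a =
     (let i = (\<lambda>k\<in>{0..<d}. a k mod n);
          j = (\<lambda>k\<in>{0..<d}. a (Suc k) div n)
      in if a 0 div n = 0 \<and> a d mod n = 0 then M i j else 0)"

(* tensors A : [N]^D \<rightarrow> F, as functions on extensional index functions *)
definition tdom :: "nat \<Rightarrow> nat set \<Rightarrow> (nat \<Rightarrow> nat) set" where
  "tdom N D = PiE D (\<lambda>_. {0..<N})"

inductive smf :: "nat \<Rightarrow> nat set \<Rightarrow> ((nat \<Rightarrow> nat) \<Rightarrow> 'a::field) \<Rightarrow> nat \<Rightarrow> bool" for N where
  base: "card D = 1 \<Longrightarrow> smf N D A (if (\<forall>a\<in>tdom N D. A a = 0) then 0 else 1)"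
| step: "finite D \<Longrightarrow> card D \<ge> 2 \<Longrightarrow>
    (\<forall>l<(m::nat). E l \<noteq> {} \<and> F l \<noteq> {} \<and> E l \<inter> F l = {} \<and> E l \<union> F l = D
           \<and> smf N (E l) (B l) (b l) \<and> smf N (F l) (C l) (c l)) \<Longrightarrow>
    (\<forall>a\<in>tdom N D. A a = (\<Sum>l<m. B l (restrict a (E l)) * C l (restrict a (F l)))) \<Longrightarrow>
    smf N D A (\<Sum>l<m. b l + c l)"

definition L_sm :: "nat \<Rightarrow> nat set \<Rightarrow> ((nat \<Rightarrow> nat) \<Rightarrow> 'a::field) \<Rightarrow> nat" where
  "L_sm N D A = (LEAST s. smf N D A s)"

end

theory Submission
  imports Defs
begin

lemma (in vec_space) lin_indpt_single:
  assumes "v \<in> carrier_vec n" "v \<noteq> 0\<^sub>v n" shows "lin_indpt {v}"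
proof -
  have "lin_indpt {}" by (simp add: lin_dep_def)
  moreover have "v \<notin> span {}" using span_empty assms by simp
  ultimately show ?thesis using lin_dep_iff_in_span[of "{}" v] assms by simp
qed

lemma (in vec_space) rank_ge1_nonzero:
  assumes A: "A \<in> carrier_mat n nc" and c: "c < nc" and r: "r < n" and nz: "A $$ (r,c) \<noteq> 0"
  shows "rank A \<ge> 1"
proof -
  have cv: "col A c \<in> carrier_vec n" using A by auto
  have "col A c $ r \<noteq> 0" using A c r nz by auto
  then have "col A c \<noteq> 0\<^sub>v n" using r by auto
  moreover have "col A c \<in> set (cols A)" using A c
    by (metis carrier_matD(2) cols_length cols_nth nth_mem)
  ultimately show ?thesis using rank_ge_card_indpt[OF A, of "{col A c}"] lin_indpt_single cv by auto
qed

lemma card_tuples: "card (tuples n d) = n ^ d" and finite_tuples: "finite (tuples n d)"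
  unfolding tuples_def by (auto simp: card_PiE finite_PiE)

lemma tuple_enum_bij: "bij_betw (tuple_enum n d) {0..<n^d} (tuples n d)"
proof -
  have "\<exists>g. bij_betw g {0..<n^d} (tuples n d)"
    using ex_bij_betw_nat_finite[OF finite_tuples[of n d]] by (simp add: card_tuples)
  then show ?thesis unfolding tuple_enum_def by (rule someI_ex)
qed

lemma to_mat_carrier: "to_mat n d X \<in> carrier_mat (n^d) (n^d)"
  unfolding to_mat_def by auto

lemma to_mat_entry: "r < n^d \<Longrightarrow> c < n^d \<Longrightarrow> to_mat n d X $$ (r,c) = X (tuple_enum n d r) (tuple_enum n d c)"
  unfolding to_mat_def by auto

lemma tmat_rank_le1:
  assumes "\<forall>r\<in>tuples n d. \<forall>c\<in>tuples n d. X r c = u r * v c"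
  shows "tmat_rank n d X \<le> 1"
  unfolding tmat_rank_def
proof (rule vec_space.rank_le_1_product_entries[OF to_mat_carrier, of _ _ _ "\<lambda>r. u (tuple_enum n d r)" "\<lambda>c. v (tuple_enum n d c)"])
  fix r c assume "r < dim_row (to_mat n d X)" "c < dim_col (to_mat n d X)"
  then have rc: "r < n^d" "c < n^d" using to_mat_carrier[of n d X] by auto
  then have "tuple_enum n d r \<in> tuples n d" "tuple_enum n d c \<in> tuples n d"
    using tuple_enum_bij[of n d] bij_betwE by fastforce+
  then show "to_mat n d X $$ (r, c) = u (tuple_enum n d r) * v (tuple_enum n d c)"
    using assms to_mat_entry[OF rc, of X] by simp
qed

lemma tmat_rank_ge1:
  assumes "r \<in> tuples n d" "c \<in> tuples n d" "X r c \<noteq> 0"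
  shows "tmat_rank n d X \<ge> 1"
proof -
  obtain r' where r': "r' < n^d" "tuple_enum n d r' = r"
    using tuple_enum_bij[of n d] assms(1) by (metis atLeastLessThan_iff bij_betw_iff_bijections)
  obtain c' where c': "c' < n^d" "tuple_enum n d c' = c"
    using tuple_enum_bij[of n d] assms(2) by (metis atLeastLessThan_iff bij_betw_iff_bijections)
  show ?thesis unfolding tmat_rank_def
    by (rule vec_space.rank_ge1_nonzero[OF to_mat_carrier c'(1) r'(1)])
      (simp add: to_mat_entry r' c' assms)
qed

lemma coloring:
  fixes grp :: "nat \<Rightarrow> nat"
  shows "\<exists>col::nat\<Rightarrow>bool. card (grp ` {0..d}) \<le> card {t. t < d \<and> col (grp t) \<noteq> col (grp (Suc t))} + 1"
proof (induction d)
  case 0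
  then show ?case by simp
next
  case (Suc d)
  then obtain col :: "nat \<Rightarrow> bool" where col: "card (grp ` {0..d}) \<le> card {t. t < d \<and> col (grp t) \<noteq> col (grp (Suc t))} + 1"
    by blast
  have ins: "{0..Suc d} = insert (Suc d) {0..d}" by auto
  show ?case
  proof (cases "grp (Suc d) \<in> grp ` {0..d}")
    case True
    then have "grp ` {0..Suc d} = grp ` {0..d}" using ins by auto
    moreover have "card {t. t < d \<and> col (grp t) \<noteq> col (grp (Suc t))}
        \<le> card {t. t < Suc d \<and> col (grp t) \<noteq> col (grp (Suc t))}"
      by (rule card_mono) auto
    ultimately show ?thesis using col by (intro exI[of _ col]) auto
  next
    case False
    define col' where "col' = col(grp (Suc d) := \<not> col (grp d))"
    have eq: "{t. t < Suc d \<and> col' (grp t) \<noteq> col' (grp (Suc t))}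
       = insert d {t. t < d \<and> col (grp t) \<noteq> col (grp (Suc t))}"
    proof -
      have "t < d \<Longrightarrow> col' (grp t) = col (grp t) \<and> col' (grp (Suc t)) = col (grp (Suc t))" for t
      proof -
        assume "t < d"
        then have g1: "grp t \<in> grp ` {0..d}" and g2: "grp (Suc t) \<in> grp ` {0..d}" by auto
        have "grp t \<noteq> grp (Suc d)" "grp (Suc t) \<noteq> grp (Suc d)" using False g1 g2 by metis+
        then show ?thesis unfolding col'_def by simp
      qed
      moreover have "col' (grp d) \<noteq> col' (grp (Suc d))"
      proof -
        have gd: "grp d \<in> grp ` {0..d}" by auto
        have "grp d \<noteq> grp (Suc d)" using False gd by (metis)
        then show ?thesis unfolding col'_def by simp
      qed
      ultimately show ?thesis by (auto simp: less_Suc_eq)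
    qed
    have "grp ` {0..Suc d} = insert (grp (Suc d)) (grp ` {0..d})" using ins by auto
    then have "card (grp ` {0..Suc d}) = Suc (card (grp ` {0..d}))" using False by simp
    moreover have "card {t. t < Suc d \<and> col' (grp t) \<noteq> col' (grp (Suc t))}
        = Suc (card {t. t < d \<and> col (grp t) \<noteq> col (grp (Suc t))})"
      unfolding eq by (subst card_insert_disjoint) auto
    ultimately show ?thesis using col by (intro exI[of _ col']) auto
  qed
qed

definition dec :: "nat \<Rightarrow> nat \<Rightarrow> ((nat\<Rightarrow>nat)\<Rightarrow>(nat\<Rightarrow>nat)\<Rightarrow>'a::field) \<Rightarrow> nat \<Rightarrow> bool" where
  "dec n d M r \<longleftrightarrow> (\<exists>Ms. length Ms \<le> r \<and>
     (\<forall>X\<in>set Ms. PT_basic n d X \<or> (\<forall>i\<in>tuples n d. \<forall>j\<in>tuples n d. X i j = 0)) \<and>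
     (\<forall>i\<in>tuples n d. \<forall>j\<in>tuples n d. M i j = (\<Sum>X\<leftarrow>Ms. X i j)))"

lemma dec_PT_rank:
  assumes "dec n d M r" shows "PT_rank n d M \<le> r"
proof -
  obtain Ms where Ms: "length Ms \<le> r"
     "\<forall>X\<in>set Ms. PT_basic n d X \<or> (\<forall>i\<in>tuples n d. \<forall>j\<in>tuples n d. X i j = 0)"
     "\<forall>i\<in>tuples n d. \<forall>j\<in>tuples n d. M i j = (\<Sum>X\<leftarrow>Ms. X i j)"
    using assms unfolding dec_def by blast
  define Z where "Z = (\<lambda>X. \<forall>i\<in>tuples n d. \<forall>j\<in>tuples n d. X i j = (0::'a))"
  define Ms' where "Ms' = filter (\<lambda>X. \<not> Z X) Ms"
  have sum_filter: "(\<Sum>X\<leftarrow>Ms. X i j) = (\<Sum>X\<leftarrow>filter (\<lambda>X. \<not> Z X) Ms. X i j)"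
    if "i \<in> tuples n d" "j \<in> tuples n d" for i j
    using that by (induction Ms) (auto simp: Z_def)
  have basic: "\<forall>l<length Ms'. PT_basic n d (Ms' ! l)"
  proof (intro allI impI)
    fix l assume "l < length Ms'"
    then have "Ms' ! l \<in> set Ms'" by (rule nth_mem)
    then have "Ms' ! l \<in> set Ms" "\<not> Z (Ms' ! l)" unfolding Ms'_def by auto
    then show "PT_basic n d (Ms' ! l)" using Ms(2) unfolding Z_def by blast
  qed
  have eq: "\<forall>i\<in>tuples n d. \<forall>j\<in>tuples n d. M i j = (\<Sum>l<length Ms'. (Ms' ! l) i j)"
  proof (intro ballI)
    fix i j assume ij: "i \<in> tuples n d" "j \<in> tuples n d"
    have "M i j = (\<Sum>X\<leftarrow>Ms'. X i j)" using Ms(3) ij sum_filter[OF ij] unfolding Ms'_def by simp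
    also have "\<dots> = (\<Sum>l<length Ms'. (Ms' ! l) i j)"
      by (simp add: sum_list_sum_nth atLeast0LessThan)
    finally show "M i j = (\<Sum>l<length Ms'. (Ms' ! l) i j)" .
  qed
  have "PT_rank n d M \<le> length Ms'"
    unfolding PT_rank_def by (rule Least_le) (use basic eq in blast)
  also have "\<dots> \<le> r" using Ms(1) unfolding Ms'_def by (meson dual_order.trans length_filter_le)
  finally show ?thesis .
qed

lemma dec_sum_list:
  assumes "\<forall>t\<in>set ts. dec n d (F t) (R t)"
  shows "dec n d (\<lambda>i j. \<Sum>t\<leftarrow>ts. F t i j) (\<Sum>t\<leftarrow>ts. R t)"
  using assms
proof (induction ts)
  case Nil
  then show ?case unfolding dec_def by (intro exI[of _ "[]"]) auto
next
  case (Cons t ts)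
  obtain Ms1 where Ms1: "length Ms1 \<le> R t"
     "\<forall>X\<in>set Ms1. PT_basic n d X \<or> (\<forall>i\<in>tuples n d. \<forall>j\<in>tuples n d. X i j = 0)"
     "\<forall>i\<in>tuples n d. \<forall>j\<in>tuples n d. F t i j = (\<Sum>X\<leftarrow>Ms1. X i j)"
    using Cons.prems unfolding dec_def by auto
  obtain Ms2 where Ms2: "length Ms2 \<le> (\<Sum>t\<leftarrow>ts. R t)"
     "\<forall>X\<in>set Ms2. PT_basic n d X \<or> (\<forall>i\<in>tuples n d. \<forall>j\<in>tuples n d. X i j = 0)"
     "\<forall>i\<in>tuples n d. \<forall>j\<in>tuples n d. (\<Sum>t\<leftarrow>ts. F t i j) = (\<Sum>X\<leftarrow>Ms2. X i j)"
    using Cons unfolding dec_def by auto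
  show ?case unfolding dec_def
    by (intro exI[of _ "Ms1 @ Ms2"]) (use Ms1 Ms2 in auto)
qed

lemma dec_cong:
  assumes "dec n d M r" "\<forall>i\<in>tuples n d. \<forall>j\<in>tuples n d. M i j = M' i j" "r \<le> r'"
  shows "dec n d M' r'"
proof -
  obtain Ms where "length Ms \<le> r"
     "\<forall>X\<in>set Ms. PT_basic n d X \<or> (\<forall>i\<in>tuples n d. \<forall>j\<in>tuples n d. X i j = 0)"
     "\<forall>i\<in>tuples n d. \<forall>j\<in>tuples n d. M i j = (\<Sum>X\<leftarrow>Ms. X i j)"
    using assms(1) unfolding dec_def by blast
  then show ?thesis unfolding dec_def using assms(2,3) by (intro exI[of _ Ms]) auto
qed

definition enc :: "nat \<Rightarrow> nat \<Rightarrow> (nat\<Rightarrow>nat) \<Rightarrow> (nat\<Rightarrow>nat) \<Rightarrow> nat \<Rightarrow> nat" where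
  "enc n d i j = restrict (\<lambda>k. (if 0 < k then j (k-1) * n else 0) + (if k < d then i k else 0)) {0..d}"

definition tval :: "(nat \<Rightarrow> nat) \<times> (nat \<Rightarrow> (nat \<Rightarrow> nat) \<Rightarrow> 'a::field) \<Rightarrow> nat set \<Rightarrow> (nat \<Rightarrow> nat) \<Rightarrow> 'a" where
  "tval t S a = (\<Prod>g\<in>fst t ` S. snd t g (restrict a {b\<in>S. fst t b = g}))"

lemma restrict_enc:
  assumes "G \<subseteq> {0..d}" "\<And>k. k \<in> G \<Longrightarrow>
     (if 0 < k then j (k-1) * n else 0) + (if k < d then i k else 0)
   = (if 0 < k then j' (k-1) * n else 0) + (if k < d then i' k else 0)"
  shows "restrict (enc n d i j) G = restrict (enc n d i' j') G"
  unfolding enc_def using assms by (intro restrict_ext) auto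

lemma term_dec:
  fixes grp :: "nat \<Rightarrow> nat" and f :: "nat \<Rightarrow> (nat \<Rightarrow> nat) \<Rightarrow> 'a::field"
  assumes n: "n \<ge> 1"
  shows "dec n d (\<lambda>i j. tval (grp, f) {0..d} (enc n d i j)) (n ^ (d + 1 - card (grp ` {0..d})))"
proof -
  obtain col :: "nat \<Rightarrow> bool" where col:
    "card (grp ` {0..d}) \<le> card {t. t < d \<and> col (grp t) \<noteq> col (grp (Suc t))} + 1"
    using coloring by blast
  define c where "c = (\<lambda>b. col (grp b))"
  define U where "U = {t. t < d \<and> c t = c (Suc t)}"
  define \<kappa> where "\<kappa> = {t. t < d \<and> \<not> c t}"
  define W where "W = PiE U (\<lambda>_. {0..<n})"
  define M' where "M' = (\<lambda>i j. tval (grp, f) {0..d} (enc n d i j))"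
  define Mw where "Mw = (\<lambda>w i j. if (\<forall>t\<in>U. j t = w t) then M' i j else 0)"
  have U_sub: "U \<subseteq> {0..<d}" unfolding U_def by auto
  have \<kappa>_sub: "\<kappa> \<subseteq> {0..<d}" unfolding \<kappa>_def by auto
  have finW: "finite W" unfolding W_def using U_sub by (auto intro!: finite_PiE dest: finite_subset)
  have cardW: "card W = n ^ card U" unfolding W_def using U_sub
    by (subst card_PiE) (auto dest: finite_subset)
  have cardU: "card U \<le> d + 1 - card (grp ` {0..d})"
  proof -
    have "U \<union> {t. t < d \<and> col (grp t) \<noteq> col (grp (Suc t))} = {..<d}" unfolding U_def c_def by auto
    moreover have "U \<inter> {t. t < d \<and> col (grp t) \<noteq> col (grp (Suc t))} = {}" unfolding U_def c_def by auto
    ultimately have "card U + card {t. t < d \<and> col (grp t) \<noteq> col (grp (Suc t))} = d"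
      by (metis card_Un_disjoint card_lessThan finite_Un finite_lessThan)
    then show ?thesis using col by linarith
  qed
  obtain xs where xs: "set xs = W" "distinct xs" using finite_distinct_list[OF finW] by blast
  define Ms where "Ms = map Mw xs"
  have len: "length Ms \<le> n ^ (d + 1 - card (grp ` {0..d}))"
  proof -
    have "length Ms = n ^ card U" unfolding Ms_def using xs cardW distinct_card by fastforce
    also have "\<dots> \<le> n ^ (d + 1 - card (grp ` {0..d}))" using cardU n by (simp add: power_increasing)
    finally show ?thesis .
  qed
  have sum: "M' i j = (\<Sum>X\<leftarrow>Ms. X i j)" if ij: "i \<in> tuples n d" "j \<in> tuples n d" for i j
  proof -
    have "(\<Sum>X\<leftarrow>Ms. X i j) = (\<Sum>w\<leftarrow>xs. Mw w i j)" unfolding Ms_def by (simp add: o_def)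
    also have "\<dots> = (\<Sum>w\<in>W. Mw w i j)" using xs by (metis sum_list_distinct_conv_sum_set)
    also have "\<dots> = (\<Sum>w\<in>W. if restrict j U = w then M' i j else 0)"
    proof (rule sum.cong)
      fix w assume "w \<in> W"
      then have "(\<forall>t\<in>U. j t = w t) \<longleftrightarrow> restrict j U = w"
        unfolding W_def by (auto simp: PiE_def extensional_def fun_eq_iff)
      then show "Mw w i j = (if restrict j U = w then M' i j else 0)" unfolding Mw_def by simp
    qed simp
    also have "\<dots> = M' i j"
    proof -
      have "restrict j U \<in> W" using ij U_sub unfolding W_def tuples_def by (auto simp: PiE_iff)
      then show ?thesis using finW by simp
    qed
    finally show ?thesis by simp
  qed
  have basic: "PT_basic n d X \<or> (\<forall>i\<in>tuples n d. \<forall>j\<in>tuples n d. X i j = 0)" if "X \<in> set Ms" for X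
  proof -
    obtain w where w: "X = Mw w" using \<open>X \<in> set Ms\<close> unfolding Ms_def by auto
    show ?thesis
    proof (cases "\<exists>i\<in>tuples n d. \<exists>j\<in>tuples n d. X i j \<noteq> 0")
      case False
      then show ?thesis by blast
    next
      case True
      then obtain i j where ij: "i \<in> tuples n d" "j \<in> tuples n d" "X i j \<noteq> 0" by blast
      define I where "I = (\<lambda>r c t. if t \<in> \<kappa> then (c::nat\<Rightarrow>nat) t else (r::nat\<Rightarrow>nat) t)"
      define J where "J = (\<lambda>r c t. if t \<in> \<kappa> then (r::nat\<Rightarrow>nat) t else (c::nat\<Rightarrow>nat) t)"
      have PT: "partial_transpose \<kappa> X r c' = X (I r c') (J r c')" for r c'
        unfolding partial_transpose_def I_def J_def by simp
      have ge1: "tmat_rank n d (partial_transpose \<kappa> X) \<ge> 1"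
      proof -
        define r where "r = I i j"
        define c' where "c' = J i j"
        have e1: "I r c' = i" "J r c' = j" unfolding r_def c'_def I_def J_def by auto
        have rc: "r \<in> tuples n d" "c' \<in> tuples n d"
          using ij \<kappa>_sub unfolding r_def c'_def I_def J_def tuples_def by (auto simp: PiE_iff extensional_def)
        have "partial_transpose \<kappa> X r c' \<noteq> 0" using ij(3) unfolding PT e1 .
        then show ?thesis by (rule tmat_rank_ge1[OF rc])
      qed
      define J' where "J' = (\<lambda>r c t. if t \<in> U then w t else J r c t)"
      define h where "h = (\<lambda>g r c. f g (restrict (enc n d (I r c) (J' r c)) {b\<in>{0..d}. grp b = g}))"
      have h_red: "h g r c1 = h g r c2" if "col g" for g r c1 c2
        unfolding h_def
      proof (rule arg_cong[where f = "f g"], rule restrict_enc)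
        fix k assume k: "k \<in> {b \<in> {0..d}. grp b = g}"
        then have ck: "c k" using that unfolding c_def by simp
        have "k < d \<Longrightarrow> I r c1 k = I r c2 k" using ck unfolding I_def \<kappa>_def by simp
        moreover have "0 < k \<Longrightarrow> J' r c1 (k-1) = J' r c2 (k-1)"
        proof -
          assume "0 < k"
          show ?thesis
          proof (cases "k - 1 \<in> U")
            case True then show ?thesis unfolding J'_def by simp
          next
            case False
            then have "k - 1 \<in> \<kappa>" using ck k \<open>0 < k\<close> unfolding U_def \<kappa>_def by auto
            then show ?thesis unfolding J'_def J_def by simp
          qed
        qed
        ultimately show "(if 0 < k then J' r c1 (k - 1) * n else 0) + (if k < d then I r c1 k else 0) =
          (if 0 < k then J' r c2 (k - 1) * n else 0) + (if k < d then I r c2 k else 0)" by simp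
      qed auto
      have h_blue: "h g r1 cc = h g r2 cc" if "\<not> col g" for g r1 r2 cc
        unfolding h_def
      proof (rule arg_cong[where f = "f g"], rule restrict_enc)
        fix k assume k: "k \<in> {b \<in> {0..d}. grp b = g}"
        then have ck: "\<not> c k" using that unfolding c_def by simp
        have "k < d \<Longrightarrow> I r1 cc k = I r2 cc k" using ck unfolding I_def \<kappa>_def by simp
        moreover have "0 < k \<Longrightarrow> J' r1 cc (k-1) = J' r2 cc (k-1)"
        proof -
          assume "0 < k"
          show ?thesis
          proof (cases "k - 1 \<in> U")
            case True then show ?thesis unfolding J'_def by simp
          next
            case False
            then have "k - 1 \<notin> \<kappa>" using ck k \<open>0 < k\<close> unfolding U_def \<kappa>_def by auto
            then show ?thesis unfolding J'_def J_def by simp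
          qed
        qed
        ultimately show "(if 0 < k then J' r1 cc (k - 1) * n else 0) + (if k < d then I r1 cc k else 0) =
          (if 0 < k then J' r2 cc (k - 1) * n else 0) + (if k < d then I r2 cc k else 0)" by simp
      qed auto
      define u where "u = (\<lambda>r. (if \<forall>t\<in>U\<inter>\<kappa>. r t = w t then 1 else 0) *
          (\<Prod>g\<in>grp ` {0..d}. if col g then h g r undefined else (1::'a)))"
      define v where "v = (\<lambda>c. (if \<forall>t\<in>U-\<kappa>. c t = w t then 1 else 0) *
          (\<Prod>g\<in>grp ` {0..d}. if col g then 1 else h g undefined c))"
      have prod_eq: "u r * v c' = partial_transpose \<kappa> X r c'" for r c'
      proof -
        have cond: "(\<forall>t\<in>U. J r c' t = w t) \<longleftrightarrow> (\<forall>t\<in>U\<inter>\<kappa>. r t = w t) \<and> (\<forall>t\<in>U-\<kappa>. c' t = w t)"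
          unfolding J_def by auto
        show ?thesis
        proof (cases "\<forall>t\<in>U. J r c' t = w t")
          case False
          have "partial_transpose \<kappa> X r c' = X (I r c') (J r c')" by (rule PT)
          also have "\<dots> = 0" unfolding w Mw_def using False by (intro if_not_P)
          finally have z1: "partial_transpose \<kappa> X r c' = 0" .
          have "u r * v c' = 0" using False cond unfolding u_def v_def by auto
          then show ?thesis using z1 by simp
        next
          case True
          then have JJ: "J r c' = J' r c'" unfolding J'_def by auto
          have "X (I r c') (J r c') = M' (I r c') (J' r c')" using True JJ unfolding w Mw_def by simp
          also have "\<dots> = (\<Prod>g\<in>grp ` {0..d}. h g r c')" unfolding M'_def tval_def h_def by simp
          also have "\<dots> = (\<Prod>g\<in>grp ` {0..d}. (if col g then h g r undefined else 1) * (if col g then 1 else h g undefined c'))"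
            by (rule prod.cong) (auto intro: h_red h_blue)
          also have "\<dots> = u r * v c'" using True cond unfolding u_def v_def prod.distrib by simp
          finally show ?thesis unfolding PT by simp
        qed
      qed
      have le1: "tmat_rank n d (partial_transpose \<kappa> X) \<le> 1"
        by (rule tmat_rank_le1[of _ _ _ u v]) (simp add: prod_eq)
      have "PT_basic n d X" unfolding PT_basic_def using ge1 le1 \<kappa>_sub by (intro exI[of _ \<kappa>]) auto
      then show ?thesis by blast
    qed
  qed
  show ?thesis unfolding dec_def M'_def[symmetric]
    using len sum basic by (intro exI[of _ Ms]) auto
qed

definition extt :: "nat set \<Rightarrow> ((nat\<Rightarrow>nat) \<Rightarrow> 'a) \<Rightarrow> (nat\<Rightarrow>nat) \<times> (nat \<Rightarrow> (nat\<Rightarrow>nat) \<Rightarrow> 'a)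
    \<Rightarrow> (nat\<Rightarrow>nat) \<times> (nat \<Rightarrow> (nat\<Rightarrow>nat) \<Rightarrow> 'a)" where
  "extt Y h t = ((\<lambda>b. if b \<in> Y then 0 else Suc (fst t b)), (\<lambda>g. case g of 0 \<Rightarrow> h | Suc g' \<Rightarrow> snd t g'))"

lemma extt_image:
  assumes "X \<inter> Y = {}" "Y \<noteq> {}"
  shows "fst (extt Y h t) ` (X \<union> Y) = insert 0 (Suc ` (fst t ` X))"
  using assms unfolding extt_def by (auto simp: image_iff)

lemma extt_snd_Suc: "snd (extt Y h t) (Suc g) = snd t g"
  unfolding extt_def by simp

lemma extt_val:
  assumes "X \<inter> Y = {}" "Y \<noteq> {}" "finite X"
  shows "tval (extt Y h t) (X \<union> Y) a = tval t X (restrict a X) * (h (restrict a Y) :: 'a::field)"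
proof -
  have Y: "{b \<in> X \<union> Y. fst (extt Y h t) b = 0} = Y" unfolding extt_def by auto
  have S: "{b \<in> X \<union> Y. fst (extt Y h t) b = Suc g} = {b \<in> X. fst t b = g}" for g
    using assms(1) unfolding extt_def by auto
  have "tval (extt Y h t) (X \<union> Y) a
     = (\<Prod>g\<in>insert 0 (Suc ` (fst t ` X)). snd (extt Y h t) g (restrict a {b \<in> X \<union> Y. fst (extt Y h t) b = g}))"
    unfolding tval_def extt_image[OF assms(1,2)] ..
  also have "\<dots> = h (restrict a Y) * (\<Prod>g\<in>Suc ` (fst t ` X). snd (extt Y h t) g (restrict a {b \<in> X \<union> Y. fst (extt Y h t) b = g}))"
    using assms(3) by (subst prod.insert) (auto simp: Y extt_def)
  also have "(\<Prod>g\<in>Suc ` (fst t ` X). snd (extt Y h t) g (restrict a {b \<in> X \<union> Y. fst (extt Y h t) b = g}))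
      = (\<Prod>g\<in>fst t ` X. snd t g (restrict a {b \<in> X. fst t b = g}))"
    by (subst prod.reindex) (simp, unfold o_def S extt_snd_Suc, rule refl)
  also have "\<dots> = tval t X (restrict a X)"
    unfolding tval_def by (intro prod.cong refl arg_cong[where f = "snd t _"]) (auto simp: fun_eq_iff restrict_def)
  finally show ?thesis by (simp only: mult.commute)
qed

lemma extt_card:
  assumes "X \<inter> Y = {}" "Y \<noteq> {}" "finite X"
  shows "card (fst (extt Y h t) ` (X \<union> Y)) = Suc (card (fst t ` X))"
  unfolding extt_image[OF assms(1,2)] using assms(3)
  by (subst card_insert_disjoint) (auto simp: card_image)

lemma sum_list_concat_map:
  "(\<Sum>t\<leftarrow>concat xss. f t) = (\<Sum>xs\<leftarrow>xss. \<Sum>t\<leftarrow>xs. f t)"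
  by (induction xss) auto

lemma restrict_tdom:
  assumes "a \<in> tdom N D" "E \<subseteq> D" shows "restrict a E \<in> tdom N E"
  using assms unfolding tdom_def by (auto simp: PiE_iff)

lemma combine:
  fixes ts :: "((nat\<Rightarrow>nat) \<times> (nat \<Rightarrow> (nat\<Rightarrow>nat) \<Rightarrow> 'a::field)) list"
  assumes XY: "X \<inter> Y = {}" "Y \<noteq> {}" "finite X" "finite Y" "X \<noteq> {}" "card Y \<le> card X"
    and ts: "length ts \<le> bx" "\<forall>t\<in>set ts. card X \<le> 2 ^ (card (fst t ` X) - 1)"
      "\<forall>a\<in>tdom N X. Bx a = (\<Sum>t\<leftarrow>ts. tval t X a)"
  shows "length (map (extt Y h) ts) \<le> bx \<and>
    (\<forall>t\<in>set (map (extt Y h) ts). card (X \<union> Y) \<le> 2 ^ (card (fst t ` (X \<union> Y)) - 1)) \<and>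
    (\<forall>a\<in>tdom N (X \<union> Y). Bx (restrict a X) * h (restrict a Y) = (\<Sum>t\<leftarrow>map (extt Y h) ts. tval t (X \<union> Y) a))"
proof (intro conjI ballI)
  show "length (map (extt Y h) ts) \<le> bx" using ts by simp
next
  fix t' assume "t' \<in> set (map (extt Y h) ts)"
  then obtain t where t: "t \<in> set ts" "t' = extt Y h t" by auto
  have K: "card (fst t ` X) \<ge> 1" using XY by (simp add: Suc_leI card_gt_0_iff)
  have "card (X \<union> Y) = card X + card Y" using XY by (simp add: card_Un_disjoint)
  also have "\<dots> \<le> 2 * card X" using XY by simp
  also have "\<dots> \<le> 2 * 2 ^ (card (fst t ` X) - 1)" using ts t by simp
  also have "\<dots> = 2 ^ (card (fst t' ` (X \<union> Y)) - 1)"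
    using K extt_card[OF XY(1,2,3), of h t] t by (simp add: power_Suc[symmetric])
  finally show "card (X \<union> Y) \<le> 2 ^ (card (fst t' ` (X \<union> Y)) - 1)" .
next
  fix a assume a: "a \<in> tdom N (X \<union> Y)"
  have "Bx (restrict a X) = (\<Sum>t\<leftarrow>ts. tval t X (restrict a X))"
    using ts(3) restrict_tdom[OF a] by auto
  then have "Bx (restrict a X) * h (restrict a Y) = (\<Sum>t\<leftarrow>ts. tval t X (restrict a X) * h (restrict a Y))"
    by (simp add: sum_list_mult_const)
  also have "\<dots> = (\<Sum>t\<leftarrow>ts. tval (extt Y h t) (X \<union> Y) a)"
    by (rule arg_cong[where f=sum_list], rule map_cong[OF refl], rule extt_val[OF XY(1,2,3), symmetric])
  finally show "Bx (restrict a X) * h (restrict a Y) = (\<Sum>t\<leftarrow>map (extt Y h) ts. tval t (X \<union> Y) a)"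
    by (simp add: o_def)
qed

lemma smf_terms:
  fixes A :: "(nat \<Rightarrow> nat) \<Rightarrow> 'a::field"
  assumes "smf N D A s"
  shows "\<exists>ts :: ((nat\<Rightarrow>nat) \<times> (nat \<Rightarrow> (nat\<Rightarrow>nat) \<Rightarrow> 'a)) list. length ts \<le> s \<and>
    (\<forall>t\<in>set ts. card D \<le> 2 ^ (card (fst t ` D) - 1)) \<and>
    (\<forall>a\<in>tdom N D. A a = (\<Sum>t\<leftarrow>ts. tval t D a))"
  using assms
proof (induction rule: smf.induct)
  case (base D A)
  show ?case
  proof (cases "\<forall>a\<in>tdom N D. A a = 0")
    case True
    then show ?thesis by (intro exI[of _ "[]"]) simp
  next
    case False
    have D: "D \<noteq> {}" using base by auto
    have img: "(\<lambda>_. 0::nat) ` D = {0}" using D by auto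
    have "tval ((\<lambda>_. 0::nat), (\<lambda>_. A)) D a = A a" if "a \<in> tdom N D" for a
    proof -
      have "tval ((\<lambda>_. 0::nat), (\<lambda>_. A)) D a = A (restrict a D)" unfolding tval_def by (simp add: img)
      also have "restrict a D = a" using that unfolding tdom_def by (simp add: PiE_restrict)
      finally show ?thesis .
    qed
    then show ?thesis using False base img
      by (intro exI[of _ "[((\<lambda>_. 0::nat), (\<lambda>_. A))]"]) auto
  qed
next
  case (step D m E F B b C c A)
  have per: "\<exists>ts :: ((nat\<Rightarrow>nat) \<times> (nat \<Rightarrow> (nat\<Rightarrow>nat) \<Rightarrow> 'a)) list. length ts \<le> b l + c l \<and>
    (\<forall>t\<in>set ts. card D \<le> 2 ^ (card (fst t ` D) - 1)) \<and>
    (\<forall>a\<in>tdom N D. B l (restrict a (E l)) * C l (restrict a (F l)) = (\<Sum>t\<leftarrow>ts. tval t D a))"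
    if l: "l < m" for l
  proof -
    have H: "E l \<noteq> {}" "F l \<noteq> {}" "E l \<inter> F l = {}" "E l \<union> F l = D"
      using step.IH l by auto
    have fin: "finite (E l)" "finite (F l)" using H step.hyps(1) by auto
    obtain tsB :: "((nat\<Rightarrow>nat) \<times> (nat \<Rightarrow> (nat\<Rightarrow>nat) \<Rightarrow> 'a)) list" where tsB: "length tsB \<le> b l"
      "\<forall>t\<in>set tsB. card (E l) \<le> 2 ^ (card (fst t ` (E l)) - 1)"
      "\<forall>a\<in>tdom N (E l). B l a = (\<Sum>t\<leftarrow>tsB. tval t (E l) a)"
      using step.IH l by blast
    obtain tsC :: "((nat\<Rightarrow>nat) \<times> (nat \<Rightarrow> (nat\<Rightarrow>nat) \<Rightarrow> 'a)) list" where tsC: "length tsC \<le> c l"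
      "\<forall>t\<in>set tsC. card (F l) \<le> 2 ^ (card (fst t ` (F l)) - 1)"
      "\<forall>a\<in>tdom N (F l). C l a = (\<Sum>t\<leftarrow>tsC. tval t (F l) a)"
      using step.IH l by blast
    show ?thesis
    proof (cases "card (F l) \<le> card (E l)")
      case True
      from combine[OF H(3) H(2) fin(1) fin(2) H(1) True tsB, of "C l"]
      show ?thesis unfolding H(4) by (intro exI[of _ "map (extt (F l) (C l)) tsB"]) auto
    next
      case False
      have H3: "F l \<inter> E l = {}" using H(3) by blast
      have D': "F l \<union> E l = D" using H(4) by blast
      from combine[OF H3 H(1) fin(2) fin(1) H(2) _ tsC, of "B l"] False
      show ?thesis unfolding D' by (intro exI[of _ "map (extt (E l) (B l)) tsC"]) (auto simp: mult.commute)
    qed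
  qed
  then have "\<forall>l. \<exists>ts :: ((nat\<Rightarrow>nat) \<times> (nat \<Rightarrow> (nat\<Rightarrow>nat) \<Rightarrow> 'a)) list. l < m \<longrightarrow> (length ts \<le> b l + c l \<and>
    (\<forall>t\<in>set ts. card D \<le> 2 ^ (card (fst t ` D) - 1)) \<and>
    (\<forall>a\<in>tdom N D. B l (restrict a (E l)) * C l (restrict a (F l)) = (\<Sum>t\<leftarrow>ts. tval t D a)))"
    by blast
  then obtain TS where TS: "\<And>l. l < m \<Longrightarrow> length (TS l) \<le> b l + c l \<and>
    (\<forall>t\<in>set (TS l). card D \<le> 2 ^ (card (fst t ` D) - 1)) \<and>
    (\<forall>a\<in>tdom N D. B l (restrict a (E l)) * C l (restrict a (F l)) = (\<Sum>t\<leftarrow>TS l. tval t D a))"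
    by metis
  define ts where "ts = concat (map TS [0..<m])"
  have "length ts = (\<Sum>l\<leftarrow>[0..<m]. length (TS l))" unfolding ts_def by (simp add: length_concat o_def)
  also have "\<dots> \<le> (\<Sum>l\<leftarrow>[0..<m]. b l + c l)" by (rule sum_list_mono) (use TS in auto)
  also have "\<dots> = (\<Sum>l<m. b l + c l)" by (simp add: interv_sum_list_conv_sum_set_nat lessThan_atLeast0)
  finally have len: "length ts \<le> (\<Sum>l<m. b l + c l)" .
  have bnd: "\<forall>t\<in>set ts. card D \<le> 2 ^ (card (fst t ` D) - 1)" unfolding ts_def using TS by auto
  have val: "A a = (\<Sum>t\<leftarrow>ts. tval t D a)" if a: "a \<in> tdom N D" for a
  proof -
    have "A a = (\<Sum>l<m. B l (restrict a (E l)) * C l (restrict a (F l)))" using step.hyps(3) a by blast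
    also have "\<dots> = (\<Sum>l<m. \<Sum>t\<leftarrow>TS l. tval t D a)" using TS a by (intro sum.cong) auto
    also have "\<dots> = (\<Sum>l\<leftarrow>[0..<m]. \<Sum>t\<leftarrow>TS l. tval t D a)" by (simp add: interv_sum_list_conv_sum_set_nat lessThan_atLeast0)
    also have "\<dots> = (\<Sum>t\<leftarrow>ts. tval t D a)" unfolding ts_def sum_list_concat_map by (simp add: o_def)
    finally show ?thesis .
  qed
  show ?case using len bnd val by blast
qed

lemma smf_exists_aux:
  "\<forall>D (A::(nat\<Rightarrow>nat)\<Rightarrow>'a::field). finite D \<and> card D = k \<and> k \<ge> 1 \<longrightarrow> (\<exists>s. smf N D A s)"
proof (induction k)
  case 0
  then show ?case by simp
next
  case (Suc k)
  show ?case
  proof (intro allI impI)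
    fix D :: "nat set" and A :: "(nat\<Rightarrow>nat)\<Rightarrow>'a"
    assume D: "finite D \<and> card D = Suc k \<and> Suc k \<ge> 1"
    show "\<exists>s. smf N D A s"
    proof (cases "k = 0")
      case True
      then show ?thesis using D smf.base[of D N A] by auto
    next
      case False
      then have D2: "card D \<ge> 2" using D by auto
      then obtain x where x: "x \<in> D" by fastforce
      define F where "F = D - {x}"
      have F12: "finite F" "card F = k" using D x False unfolding F_def by auto
      then have F3: "F \<noteq> {}" using False by auto
      note F = F12 F3
      define B where "B = (\<lambda>(l::nat) (a::nat\<Rightarrow>nat). if a x = l then (1::'a) else 0)"
      define C where "C = (\<lambda>(l::nat) (a::nat\<Rightarrow>nat). A (a(x := l)))"
      have "\<forall>l. \<exists>bc. l < N \<longrightarrow> smf N {x} (B l) (fst bc) \<and> smf N F (C l) (snd bc)"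
      proof (intro allI)
        fix l
        obtain s1 where "smf N {x} (B l) s1" using smf.base[of "{x}" N "B l"] by auto
        moreover obtain s2 where "smf N F (C l) s2" using Suc.IH F False by auto
        ultimately show "\<exists>bc. l < N \<longrightarrow> smf N {x} (B l) (fst bc) \<and> smf N F (C l) (snd bc)"
          by (intro exI[of _ "(s1, s2)"]) auto
      qed
      then obtain bc where bc: "\<And>l. l < N \<Longrightarrow> smf N {x} (B l) (fst (bc l)) \<and> smf N F (C l) (snd (bc l))"
        by metis
      have eq: "A a = (\<Sum>l<N. B l (restrict a {x}) * C l (restrict a F))" if a: "a \<in> tdom N D" for a
      proof -
        have ax: "a x < N" using a x unfolding tdom_def by auto
        have "(\<Sum>l<N. B l (restrict a {x}) * C l (restrict a F))
            = (\<Sum>l<N. if a x = l then A ((restrict a F)(x := l)) else 0)"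
          unfolding B_def C_def by (intro sum.cong) auto
        also have "\<dots> = A ((restrict a F)(x := a x))" using ax by simp
        also have "(restrict a F)(x := a x) = a"
          using a unfolding tdom_def F_def by (auto simp: fun_eq_iff PiE_def extensional_def)
        finally show ?thesis by (rule sym)
      qed
      have "smf N D A (\<Sum>l<N. fst (bc l) + snd (bc l))"
      proof (rule smf.step[where m = N and E = "\<lambda>_. {x}" and F = "\<lambda>_. F" and B = B and C = C
            and b = "\<lambda>l. fst (bc l)" and c = "\<lambda>l. snd (bc l)"])
        show "finite D" using D by simp
        show "2 \<le> card D" by (rule D2)
        show "\<forall>l<N. {x} \<noteq> {} \<and> F \<noteq> {} \<and> {x} \<inter> F = {} \<and> {x} \<union> F = D \<and>
            smf N {x} (B l) (fst (bc l)) \<and> smf N F (C l) (snd (bc l))"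
          using bc F x unfolding F_def by auto
        show "\<forall>a\<in>tdom N D. A a = (\<Sum>l<N. B l (restrict a {x}) * C l (restrict a F))" using eq by blast
      qed
      then show ?thesis by blast
    qed
  qed
qed

lemma smf_exists: "finite D \<Longrightarrow> D \<noteq> {} \<Longrightarrow> \<exists>s. smf N D (A::(nat\<Rightarrow>nat)\<Rightarrow>'a::field) s"
proof -
  assume "finite D" "D \<noteq> {}"
  then have "card D \<ge> 1" by (simp add: Suc_leI card_gt_0_iff)
  then show ?thesis using smf_exists_aux[of "card D" N] \<open>finite D\<close> by blast
qed

lemma lt_sq: "(x::nat) < n \<Longrightarrow> y < n \<Longrightarrow> x * n + y < n^2"
proof -
  assume xy: "x < n" "y < n"
  have "x * n + y < x * n + n" using xy by simp
  also have "\<dots> = Suc x * n" by simp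
  also have "\<dots> \<le> n * n" using xy by (intro mult_right_mono) auto
  finally show ?thesis by (simp add: power2_eq_square)
qed

lemma enc_tdom:
  assumes "n \<ge> 1" "i \<in> tuples n d" "j \<in> tuples n d"
  shows "enc n d i j \<in> tdom (n^2) {0..d}"
proof -
  have "(if 0 < k then j (k-1) * n else 0) + (if k < d then i k else 0) < n^2" if k: "k \<le> d" for k
  proof -
    have X: "(if 0 < k then j (k-1) else 0) < n"
    proof (cases "0 < k")
      case True
      then have "k - 1 \<in> {0..<d}" using k by auto
      then have "j (k-1) \<in> {0..<n}" by (rule PiE_mem[OF assms(3)[unfolded tuples_def]])
      then show ?thesis using True by simp
    qed (use assms(1) in simp)
    have Y: "(if k < d then i k else 0) < n"
    proof (cases "k < d")
      case True
      then have "k \<in> {0..<d}" by auto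
      then have "i k \<in> {0..<n}" by (rule PiE_mem[OF assms(2)[unfolded tuples_def]])
      then show ?thesis using True by simp
    qed (use assms(1) in simp)
    have "(if 0 < k then j (k-1) * n else 0) + (if k < d then i k else 0)
        = (if 0 < k then j (k-1) else 0) * n + (if k < d then i k else 0)" by simp
    then show ?thesis using lt_sq[OF X Y] by simp
  qed
  then show ?thesis unfolding enc_def tdom_def by (auto simp: PiE_iff)
qed

lemma enc_shifted:
  assumes "n \<ge> 1" "d \<ge> 1" "i \<in> tuples n d" "j \<in> tuples n d"
  shows "shifted_tensor n d M (enc n d i j) = M i j"
proof -
  have ib: "k < d \<Longrightarrow> i k < n" for k using assms(3) unfolding tuples_def by (auto simp: PiE_iff)
  have jb: "k < d \<Longrightarrow> j k < n" for k using assms(4) unfolding tuples_def by (auto simp: PiE_iff)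
  define a where "a = enc n d i j"
  have a0: "a 0 div n = 0" unfolding a_def enc_def using assms(2) ib[of 0] by simp
  have ad: "a d mod n = 0" unfolding a_def enc_def using assms(2) by simp
  have ii: "(\<lambda>k\<in>{0..<d}. a k mod n) = i"
  proof
    fix k show "(\<lambda>k\<in>{0..<d}. a k mod n) k = i k"
      using assms(3) ib[of k] unfolding a_def enc_def tuples_def by (auto simp: PiE_def extensional_def)
  qed
  have jj: "(\<lambda>k\<in>{0..<d}. a (Suc k) div n) = j"
  proof
    fix k show "(\<lambda>k\<in>{0..<d}. a (Suc k) div n) k = j k"
      using assms(4) ib[of "Suc k"] assms(1) unfolding a_def enc_def tuples_def by (auto simp: PiE_def extensional_def)
  qed
  show ?thesis unfolding shifted_tensor_def a_def[symmetric] Let_def ii jj using a0 ad by simp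
qed

lemma real_sum_list_bound:
  assumes "\<forall>t\<in>set ts. real (f t) \<le> P"
  shows "real (\<Sum>t\<leftarrow>ts. f t) \<le> real (length ts) * P"
  using assms by (induction ts) (auto simp: algebra_simps)

theorem theorem1p4:
  fixes M :: "(nat \<Rightarrow> nat) \<Rightarrow> (nat \<Rightarrow> nat) \<Rightarrow> 'a::field"
    and n d :: nat
  assumes "n \<ge> 1" and "d \<ge> 1"
  shows "real (L_sm (n^2) {0..d} (shifted_tensor n d M))
           \<ge> real (PT_rank n d M) / real n powr (real d - log 2 (real d) + 1)"
proof -
  define A where "A = shifted_tensor n d M"
  define L where "L = L_sm (n^2) {0..d} A"
  define P where "P = real n powr (real d - log 2 (real d) + 1)"
  have P0: "P > 0" unfolding P_def using assms(1) by simp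
  have ex: "\<exists>s. smf (n^2) {0..d} A s" by (rule smf_exists) auto
  have smfL: "smf (n^2) {0..d} A L" unfolding L_def L_sm_def by (rule LeastI_ex[OF ex])
  obtain ts :: "((nat\<Rightarrow>nat) \<times> (nat \<Rightarrow> (nat\<Rightarrow>nat) \<Rightarrow> 'a)) list" where ts: "length ts \<le> L"
    "\<forall>t\<in>set ts. card {0..d} \<le> 2 ^ (card (fst t ` {0..d}) - 1)"
    "\<forall>a\<in>tdom (n^2) {0..d}. A a = (\<Sum>t\<leftarrow>ts. tval t {0..d} a)"
    using smf_terms[OF smfL] by blast
  have dec1: "dec n d (\<lambda>i j. \<Sum>t\<leftarrow>ts. tval t {0..d} (enc n d i j)) (\<Sum>t\<leftarrow>ts. n ^ (d + 1 - card (fst t ` {0..d})))"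
  proof (rule dec_sum_list[where F = "\<lambda>t i j. tval t {0..d} (enc n d i j)"], intro ballI)
    fix t :: "(nat\<Rightarrow>nat) \<times> (nat \<Rightarrow> (nat\<Rightarrow>nat) \<Rightarrow> 'a)"
    show "dec n d (\<lambda>i j. tval t {0..d} (enc n d i j)) (n ^ (d + 1 - card (fst t ` {0..d})))"
      using term_dec[OF assms(1), of d "fst t" "snd t"] by simp
  qed
  have dec2: "dec n d M (\<Sum>t\<leftarrow>ts. n ^ (d + 1 - card (fst t ` {0..d})))"
  proof (rule dec_cong[OF dec1], intro ballI)
    fix i j assume ij: "i \<in> tuples n d" "j \<in> tuples n d"
    show "(\<Sum>t\<leftarrow>ts. tval t {0..d} (enc n d i j)) = M i j"
      using ts(3) enc_tdom[OF assms(1) ij] enc_shifted[OF assms ij, of M] unfolding A_def by simp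
  qed simp
  have PT: "PT_rank n d M \<le> (\<Sum>t\<leftarrow>ts. n ^ (d + 1 - card (fst t ` {0..d})))"
    by (rule dec_PT_rank[OF dec2])
  have each: "real (n ^ (d + 1 - card (fst t ` {0..d}))) \<le> P" if t: "t \<in> set ts" for t
  proof -
    define K where "K = card (fst t ` {0..d})"
    have K1: "K \<ge> 1" unfolding K_def by (simp add: Suc_leI card_gt_0_iff)
    have Kd: "K \<le> d + 1" unfolding K_def using card_image_le[of "{0..d}" "fst t"] by simp
    have nb: "d + 1 \<le> (2::nat) ^ (K - 1)" using ts(2) t unfolding K_def by simp
    have "d \<le> (2::nat) ^ (K - 1)" using nb by simp
    then have "log 2 (real d) \<le> real (K - 1)" using assms(2) by (intro log2_of_power_le) auto
    then have ex: "real (d + 1 - K) \<le> real d - log 2 (real d) + 1" using K1 Kd by (simp add: of_nat_diff)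
    have "real (n ^ (d + 1 - K)) = real n powr real (d + 1 - K)"
      using assms(1) by (simp add: powr_realpow)
    also have "\<dots> \<le> P" unfolding P_def using ex assms(1) by (intro powr_mono) auto
    finally show ?thesis unfolding K_def .
  qed
  have "real (PT_rank n d M) \<le> real (\<Sum>t\<leftarrow>ts. n ^ (d + 1 - card (fst t ` {0..d})))" using PT by simp
  also have "\<dots> \<le> real (length ts) * P" by (rule real_sum_list_bound) (use each in blast)
  also have "\<dots> \<le> real L * P" using ts(1) P0 by (simp add: mult_right_mono)
  finally have "real (PT_rank n d M) / P \<le> real L" using P0 by (simp add: divide_le_eq)
  then show ?thesis unfolding L_def A_def P_def .
qed

end
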